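(* Let $\mathbf{u}\in[-1,1]^m$ satisfy $\langle\mathbf{1},\mathbf{u}\rangle=0$, and let $\mathcal{P}=\{\mathbf{p}\in[0,2]^m:\langle\mathbf{1},\mathbf{p}\rangle=m\}$. Consider the two-player zero-sum game $\Gamma_0$ in which the principal chooses $\mathbf{p}\in\mathcal{P}$, the agent chooses $\mathbf{x}\in\Delta(m)$, the agent's utility is $\langle\mathbf{u}+\mathbf{p},\mathbf{x}\rangle$ and the principal's utility is $-\langle\mathbf{u}+\mathbf{p},\mathbf{x}\rangle$. Then in every $\varepsilon$-Nash equilibrium $(\mathbf{p},\mathbf{x})$ of $\Gamma_0$, the principal's strategy has the form $\mathbf{p}=\mathbf{1}-\mathbf{u}+\mathbf{z}$ with $\|\mathbf{z}\|_1\le 4m\varepsilon$.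
   Context: $\mathbf{1}$ is the all-ones vector in $\mathbb{R}^m$ and $\Delta(m)$ is the probability simplex. An $\varepsilon$-Nash equilibrium is a pair in which neither player can gain more than $\varepsilon$ by a unilateral deviation. *)

theory Defs
  imports "HOL-Analysis.Analysis"
begin

text \<open>Vectors in R^m are modelled as real^'m with m = CARD('m).\<close>

definition ones :: "real ^ 'm" where
  "ones = (\<chi> i. 1)"

definition prob_simplex :: "(real ^ 'm) set" where
  "prob_simplex = {x. (\<forall>i. 0 \<le> x $ i) \<and> (\<Sum>i\<in>UNIV. x $ i) = 1}"

definition principal_set :: "(real ^ 'm) set" where
  "principal_set = {p. (\<forall>i. 0 \<le> p $ i \<and> p $ i \<le> 2) \<and> ones \<bullet> p = real CARD('m)}"

definition agent_util :: "real ^ 'm \<Rightarrow> real ^ 'm \<Rightarrow> real ^ 'm \<Rightarrow> real" where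
  "agent_util u p x = (u + p) \<bullet> x"

definition eps_nash_Gamma0 :: "real ^ 'm \<Rightarrow> real \<Rightarrow> real ^ 'm \<Rightarrow> real ^ 'm \<Rightarrow> bool" where
  "eps_nash_Gamma0 u \<epsilon> p x \<longleftrightarrow>
     p \<in> principal_set \<and> x \<in> prob_simplex \<and>
     (\<forall>x'\<in>prob_simplex. agent_util u p x' \<le> agent_util u p x + \<epsilon>) \<and>
     (\<forall>p'\<in>principal_set. - agent_util u p' x \<le> - agent_util u p x + \<epsilon>)"

definition l1norm :: "real ^ 'm \<Rightarrow> real" where
  "l1norm z = (\<Sum>i\<in>UNIV. \<bar>z $ i\<bar>)"

end

theory Submission
  imports Defs
begin

lemma inner_sum_vec: "(a::real^'m) \<bullet> b = (\<Sum>i\<in>UNIV. a$i * b$i)"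
  by (simp add: inner_vec_def)

theorem lemma5p1:
  fixes u p x :: "real ^ 'm" and \<epsilon> :: real
  assumes "\<forall>i. -1 \<le> u $ i \<and> u $ i \<le> 1"
    and "ones \<bullet> u = 0"
    and "eps_nash_Gamma0 u \<epsilon> p x"
  shows "\<exists>z. p = ones - u + z \<and> l1norm z \<le> 4 * real CARD('m) * \<epsilon>"
proof -
  have pP: "p \<in> principal_set" and xS: "x \<in> prob_simplex"
    and ag: "\<forall>x'\<in>prob_simplex. agent_util u p x' \<le> agent_util u p x + \<epsilon>"
    and pr: "\<forall>p'\<in>principal_set. - agent_util u p' x \<le> - agent_util u p x + \<epsilon>"
    using assms(3) unfolding eps_nash_Gamma0_def by auto
  have su: "(\<Sum>i\<in>UNIV. u$i) = 0" using assms(2) by (simp add: inner_sum_vec ones_def)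
  have sp: "(\<Sum>i\<in>UNIV. p$i) = real CARD('m)" using pP
    by (simp add: principal_set_def inner_sum_vec ones_def)
  have sx: "(\<Sum>i\<in>UNIV. x$i) = 1" using xS by (simp add: prob_simplex_def)
  have eps0: "0 \<le> \<epsilon>" using ag xS by fastforce
  have p'P: "ones - u \<in> principal_set"
    using assms(1) su by (auto simp: principal_set_def inner_sum_vec ones_def sum_subtractf)
  have "- agent_util u (ones - u) x \<le> - agent_util u p x + \<epsilon>" using pr p'P by blast
  moreover have "agent_util u (ones - u) x = 1"
    using sx by (simp add: agent_util_def inner_sum_vec ones_def)
  ultimately have V: "agent_util u p x \<le> 1 + \<epsilon>" by simp
  have vi: "u$i + p$i \<le> 1 + 2*\<epsilon>" for i
  proof -
    have "axis i 1 \<in> prob_simplex"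
      by (simp add: prob_simplex_def axis_def sum.delta)
    hence "agent_util u p (axis i 1) \<le> agent_util u p x + \<epsilon>" using ag by blast
    moreover have "agent_util u p (axis i 1) = u$i + p$i"
      by (simp add: agent_util_def inner_axis)
    ultimately show ?thesis using V by simp
  qed
  define z where "z = p - ones + u"
  have zi: "z$i = u$i + p$i - 1" for i by (simp add: z_def ones_def)
  have sz: "(\<Sum>i\<in>UNIV. z$i) = 0"
    by (simp add: zi sum_subtractf sum.distrib su sp)
  have "l1norm z = (\<Sum>i\<in>UNIV. 2 * max (z$i) 0 - z$i)"
    unfolding l1norm_def by (rule sum.cong) auto
  also have "\<dots> = 2 * (\<Sum>i\<in>UNIV. max (z$i) 0)"
    by (simp add: sum_subtractf sz sum_distrib_left)
  also have "\<dots> \<le> 2 * (\<Sum>i\<in>(UNIV::'m set). 2 * \<epsilon>)"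
  proof -
    have "(\<Sum>i\<in>UNIV. max (z$i) 0) \<le> (\<Sum>i\<in>(UNIV::'m set). 2 * \<epsilon>)"
    proof (rule sum_mono)
      fix i :: 'm
      show "max (z$i) 0 \<le> 2 * \<epsilon>" using vi[of i] eps0 zi[of i] by linarith
    qed
    thus ?thesis by (simp add: algebra_simps)
  qed
  also have "\<dots> = 4 * real CARD('m) * \<epsilon>" by simp
  finally have "l1norm z \<le> 4 * real CARD('m) * \<epsilon>" .
  moreover have "p = ones - u + z" by (simp add: z_def)
  ultimately show ?thesis by blast
qed

end
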